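(* Consider the asynchronous Sinkhorn iteration described in the context, started from any $v^{(0)}\in\mathbb R_{++}^Y$. Then: (i) $u^{(\ell)}$ and $\alpha^{(\ell)}=\varepsilon\log u^{(\ell)}$ are (componentwise) nondecreasing in $\ell$, $v^{(\ell)}$ and $\beta^{(\ell)}=\varepsilon\log v^{(\ell)}$ are nonincreasing in $\ell$, and $q^{(\ell)}$ is nondecreasing in $\ell$; (ii) for every $\ell\ge1$, $\sum_y\pi^{(\ell)}(x,y)\le\mu(x)$ for all $x$ and $\sum_x\pi^{(\ell)}(x,y)\le\nu(y)$ for all $y$; (iii) there exists $y^*\in Y$ with $v^{(\ell)}(y^* )=v^{(0)}(y^* )$ for all $\ell$.
   Context: $X,Y$ finite sets, $\mu\in\mathcal P(X)$, $\nu\in\mathcal P(Y)$ with strictly positive entries, $c\in\mathbb R_+^{X\times Y}$, $\varepsilon>0$, and kernel $K(x,y)=\exp(-c(x,y)/\varepsilon)\mu(x)\nu(y)$. The asynchronous Sinkhorn iteration: given $v^{(0)}\in\mathbb R_{++}^Y$, for $\ell\ge0$ set $u^{(\ell+1)}=\mu\oslash(Kv^{(\ell)})$, $\hat v^{(\ell+1)}=\nu\oslash(K^\top u^{(\ell+1)})$, $v^{(\ell+1)}=\min\{v^{(\ell)},\hat v^{(\ell+1)}\}$ (componentwise minimum), $\pi^{(\ell+1)}=\mathrm{diag}(u^{(\ell+1)})K\mathrm{diag}(v^{(\ell+1)})$, $q^{(\ell+1)}=\sum_{x,y}\pi^{(\ell+1)}(x,y)$. Here $\oslash$ is componentwise division.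 *)

theory Defs
  imports Complex_Main
begin

definition kern :: "('x \<Rightarrow> real) \<Rightarrow> ('y \<Rightarrow> real) \<Rightarrow> ('x \<Rightarrow> 'y \<Rightarrow> real) \<Rightarrow> real
                    \<Rightarrow> 'x \<Rightarrow> 'y \<Rightarrow> real" where
  "kern mu nu c eps x y = exp (- c x y / eps) * mu x * nu y"

definition u_upd :: "('x::finite \<Rightarrow> 'y::finite \<Rightarrow> real) \<Rightarrow> ('x \<Rightarrow> real) \<Rightarrow> ('y \<Rightarrow> real) \<Rightarrow> 'x \<Rightarrow> real" where
  "u_upd K mu v = (\<lambda>x. mu x / (\<Sum>y\<in>UNIV. K x y * v y))"

definition v_upd :: "('x::finite \<Rightarrow> 'y::finite \<Rightarrow> real) \<Rightarrow> ('y \<Rightarrow> real) \<Rightarrow> ('x \<Rightarrow> real) \<Rightarrow> 'y \<Rightarrow> real" where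
  "v_upd K nu u = (\<lambda>y. nu y / (\<Sum>x\<in>UNIV. K x y * u x))"

primrec async_v :: "('x::finite \<Rightarrow> 'y::finite \<Rightarrow> real) \<Rightarrow> ('x \<Rightarrow> real) \<Rightarrow> ('y \<Rightarrow> real)
                    \<Rightarrow> ('y \<Rightarrow> real) \<Rightarrow> nat \<Rightarrow> 'y \<Rightarrow> real" where
  "async_v K mu nu v0 0 = v0"
| "async_v K mu nu v0 (Suc l) =
     (let v = async_v K mu nu v0 l;
          u = u_upd K mu v;
          vh = v_upd K nu u
      in (\<lambda>y. min (v y) (vh y)))"

text \<open>u^(l) for l >= 1: u^(l) = mu ./ (K v^(l-1)). (u^(0) is not used.)\<close>
definition async_u :: "('x::finite \<Rightarrow> 'y::finite \<Rightarrow> real) \<Rightarrow> ('x \<Rightarrow> real) \<Rightarrow> ('y \<Rightarrow> real)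
                    \<Rightarrow> ('y \<Rightarrow> real) \<Rightarrow> nat \<Rightarrow> 'x \<Rightarrow> real" where
  "async_u K mu nu v0 l = u_upd K mu (async_v K mu nu v0 (l - 1))"

definition async_pi :: "('x::finite \<Rightarrow> 'y::finite \<Rightarrow> real) \<Rightarrow> ('x \<Rightarrow> real) \<Rightarrow> ('y \<Rightarrow> real)
                    \<Rightarrow> ('y \<Rightarrow> real) \<Rightarrow> nat \<Rightarrow> 'x \<Rightarrow> 'y \<Rightarrow> real" where
  "async_pi K mu nu v0 l x y = async_u K mu nu v0 l x * K x y * async_v K mu nu v0 l y"

definition async_q :: "('x::finite \<Rightarrow> 'y::finite \<Rightarrow> real) \<Rightarrow> ('x \<Rightarrow> real) \<Rightarrow> ('y \<Rightarrow> real)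
                    \<Rightarrow> ('y \<Rightarrow> real) \<Rightarrow> nat \<Rightarrow> real" where
  "async_q K mu nu v0 l = (\<Sum>x\<in>UNIV. \<Sum>y\<in>UNIV. async_pi K mu nu v0 l x y)"

end

theory Submission
  imports Defs
begin

lemma sum_pos_univ:
  fixes f :: "'a::finite \<Rightarrow> real"
  assumes "\<forall>x. f x > 0" shows "(\<Sum>x\<in>UNIV. f x) > 0"
  by (rule sum_pos) (use assms in auto)

lemma u_upd_pos:
  assumes "\<forall>x y. K x y > 0" "\<forall>x. mu x > 0" "\<forall>y. w y > 0"
  shows "u_upd K mu w x > 0"
  unfolding u_upd_def using assms
  by (intro divide_pos_pos sum_pos_univ) (auto intro!: sum_pos_univ)

lemma v_upd_pos:
  assumes "\<forall>x y. K x y > 0" "\<forall>y. nu y > 0" "\<forall>x. w x > 0"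
  shows "v_upd K nu w y > 0"
  unfolding v_upd_def using assms
  by (intro divide_pos_pos sum_pos_univ) (auto intro!: sum_pos_univ)

lemma u_upd_anti:
  assumes "\<forall>x y. K x y > 0" "\<forall>x. mu x > 0" "\<forall>y. w y > 0" "\<forall>y. w y \<le> w' y"
  shows "u_upd K mu w' x \<le> u_upd K mu w x"
proof -
  have a: "(\<Sum>y\<in>UNIV. K x y * w y) > 0" using assms by (intro sum_pos_univ) auto
  have b: "(\<Sum>y\<in>UNIV. K x y * w y) \<le> (\<Sum>y\<in>UNIV. K x y * w' y)"
    using assms by (intro sum_mono mult_left_mono) (auto intro: less_imp_le)
  show ?thesis unfolding u_upd_def
    by (rule divide_left_mono) (use a b assms(2) in \<open>auto intro: less_imp_le\<close>)
qed

lemma v_upd_anti: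
  assumes "\<forall>x y. K x y > 0" "\<forall>y. nu y > 0" "\<forall>x. w x > 0" "\<forall>x. w x \<le> w' x"
  shows "v_upd K nu w' y \<le> v_upd K nu w y"
proof -
  have a: "(\<Sum>x\<in>UNIV. K x y * w x) > 0" using assms by (intro sum_pos_univ) auto
  have b: "(\<Sum>x\<in>UNIV. K x y * w x) \<le> (\<Sum>x\<in>UNIV. K x y * w' x)"
    using assms by (intro sum_mono mult_left_mono) (auto intro: less_imp_le)
  show ?thesis unfolding v_upd_def
    by (rule divide_left_mono) (use a b assms(2) in \<open>auto intro: less_imp_le\<close>)
qed

definition FF where "FF K mu nu w = v_upd K nu (u_upd K mu w)"

lemma FF_mono:
  assumes "\<forall>x y. K x y > 0" "\<forall>x. mu x > 0" "\<forall>y. nu y > 0" "\<forall>y. w y > 0" "\<forall>y. w y \<le> w' y"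
  shows "FF K mu nu w y \<le> FF K mu nu w' y"
proof -
  have "\<forall>y. w' y > 0" using assms(4,5) by (meson less_le_trans)
  then have "\<forall>x. u_upd K mu w' x > 0" using assms u_upd_pos by blast
  moreover have "\<forall>x. u_upd K mu w' x \<le> u_upd K mu w x" using assms u_upd_anti by blast
  ultimately show ?thesis unfolding FF_def using v_upd_anti assms by blast
qed

lemma FF_avg:
  fixes K :: "'x::finite \<Rightarrow> 'y::finite \<Rightarrow> real"
  assumes "\<forall>x y. K x y > 0" "\<forall>x. mu x > 0" "\<forall>y. nu y > 0" "\<forall>y. w y > 0"
    and "(\<Sum>x\<in>UNIV. mu x) = 1" "(\<Sum>y\<in>UNIV. nu y) = 1"
  shows "(\<Sum>y\<in>UNIV. FF K mu nu w y * (\<Sum>x\<in>UNIV. K x y * u_upd K mu w x))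
       = (\<Sum>y\<in>UNIV. w y * (\<Sum>x\<in>UNIV. K x y * u_upd K mu w x))"
proof -
  have up: "\<forall>x. u_upd K mu w x > 0" using assms u_upd_pos by blast
  have "(\<Sum>y\<in>UNIV. FF K mu nu w y * (\<Sum>x\<in>UNIV. K x y * u_upd K mu w x)) = (\<Sum>y\<in>UNIV. nu y)"
  proof (rule sum.cong)
    fix y
    have "(\<Sum>x\<in>UNIV. K x y * u_upd K mu w x) > 0" using up assms by (intro sum_pos_univ) auto
    then show "FF K mu nu w y * (\<Sum>x\<in>UNIV. K x y * u_upd K mu w x) = nu y"
      unfolding FF_def v_upd_def by simp
  qed simp
  also have "\<dots> = (\<Sum>x\<in>UNIV. mu x)" using assms by simp
  also have "\<dots> = (\<Sum>x\<in>UNIV. u_upd K mu w x * (\<Sum>y\<in>UNIV. K x y * w y))"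
  proof (rule sum.cong)
    fix x
    have "(\<Sum>y\<in>UNIV. K x y * w y) > 0" using assms by (intro sum_pos_univ) auto
    then show "mu x = u_upd K mu w x * (\<Sum>y\<in>UNIV. K x y * w y)"
      unfolding u_upd_def by simp
  qed simp
  also have "\<dots> = (\<Sum>x\<in>UNIV. \<Sum>y\<in>UNIV. w y * (K x y * u_upd K mu w x))"
    by (simp add: sum_distrib_left mult_ac)
  also have "\<dots> = (\<Sum>y\<in>UNIV. \<Sum>x\<in>UNIV. w y * (K x y * u_upd K mu w x))"
    by (rule sum.swap)
  also have "\<dots> = (\<Sum>y\<in>UNIV. w y * (\<Sum>x\<in>UNIV. K x y * u_upd K mu w x))"
    by (simp add: sum_distrib_left)
  finally show ?thesis .
qed

lemma v_Suc: "async_v K mu nu v0 (Suc l) y = min (async_v K mu nu v0 l y) (FF K mu nu (async_v K mu nu v0 l) y)"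
  by (simp add: FF_def Let_def)


theorem mainTheorem3:
  fixes mu :: "'x::finite \<Rightarrow> real" and nu :: "'y::finite \<Rightarrow> real"
    and c :: "'x \<Rightarrow> 'y \<Rightarrow> real" and eps :: real and v0 :: "'y \<Rightarrow> real"
  defines "K \<equiv> kern mu nu c eps"
  defines "u \<equiv> async_u K mu nu v0" and "v \<equiv> async_v K mu nu v0"
    and "P \<equiv> async_pi K mu nu v0" and "q \<equiv> async_q K mu nu v0"
  assumes mu_pos: "\<forall>x. mu x > 0" and mu_sum: "(\<Sum>x\<in>UNIV. mu x) = 1"
    and nu_pos: "\<forall>y. nu y > 0" and nu_sum: "(\<Sum>y\<in>UNIV. nu y) = 1"
    and c_nonneg: "\<forall>x y. c x y \<ge> 0"
    and eps_pos: "eps > 0"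
    and v0_pos: "\<forall>y. v0 y > 0"
  shows "(\<forall>l\<ge>1. \<forall>x. u l x \<le> u (Suc l) x \<and> eps * ln (u l x) \<le> eps * ln (u (Suc l) x))
       \<and> (\<forall>l. \<forall>y. v (Suc l) y \<le> v l y \<and> eps * ln (v (Suc l) y) \<le> eps * ln (v l y))
       \<and> (\<forall>l\<ge>1. q l \<le> q (Suc l))
       \<and> (\<forall>l\<ge>1. (\<forall>x. (\<Sum>y\<in>UNIV. P l x y) \<le> mu x) \<and> (\<forall>y. (\<Sum>x\<in>UNIV. P l x y) \<le> nu y))
       \<and> (\<exists>ys. \<forall>l. v l ys = v0 ys)"
proof -
  have Kp: "\<forall>x y. K x y > 0" unfolding K_def kern_def using mu_pos nu_pos by auto
  have mp: "\<forall>x. mu x > 0" and np: "\<forall>y. nu y > 0" using mu_pos nu_pos by auto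
  have vpos: "\<forall>y. v l y > 0" for l
  proof (induction l)
    case 0 then show ?case using v0_pos by (simp add: v_def)
  next
    case (Suc l)
    have "\<forall>y. FF K mu nu (v l) y > 0" unfolding FF_def
      using v_upd_pos[OF Kp np] u_upd_pos[OF Kp mp Suc] by blast
    then show ?case using Suc by (simp add: v_def FF_def Let_def)
  qed
  have vS: "v (Suc l) y = min (v l y) (FF K mu nu (v l) y)" for l y
    unfolding v_def by (rule v_Suc)
  have vdec: "v (Suc l) y \<le> v l y" for l y using vS by simp
  have vle0: "v l y \<le> v0 y" for l y
  proof (induction l)
    case 0 then show ?case by (simp add: v_def)
  next
    case (Suc l) then show ?case using vdec[of l y] by linarith
  qed
  have vmono: "v l' y \<le> v l y" if "l \<le> l'" for l l' y
    using that by (induction rule: dec_induct) (auto intro: order.trans[OF vdec])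
  have uS: "u (Suc l) = u_upd K mu (v l)" for l unfolding u_def v_def async_u_def by simp
  have upos: "u (Suc l) x > 0" for l x using u_upd_pos[OF Kp mp vpos] uS by simp
  have uinc: "u l x \<le> u (Suc l) x" if hl: "l \<ge> 1" for l x
  proof -
    obtain k where k: "l = Suc k" using hl by (cases l) auto
    show ?thesis unfolding k uS
      by (rule u_upd_anti[OF Kp mp vpos]) (simp add: vdec)
  qed
  define a where "a l y = (\<Sum>x\<in>UNIV. K x y * u l x)" for l y
  have apos: "a (Suc l) y > 0" for l y unfolding a_def using Kp upos by (intro sum_pos_univ) auto
  have Fa: "FF K mu nu (v l) y * a (Suc l) y = nu y" for l y
    using apos[of l y] unfolding FF_def v_upd_def a_def uS by simp
  have col: "(\<Sum>x\<in>UNIV. P l x y) = v l y * a l y" for l y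
    unfolding P_def async_pi_def a_def u_def[symmetric] v_def[symmetric]
    by (simp add: sum_distrib_left mult_ac)
  have colb: "(\<Sum>x\<in>UNIV. P l x y) \<le> nu y" if hl: "l \<ge> 1" for l y
  proof -
    obtain k where k: "l = Suc k" using hl by (cases l) auto
    have "v l y * a l y \<le> FF K mu nu (v k) y * a l y"
      unfolding k using apos[of k y] vS[of k y] by (intro mult_right_mono) auto
    then show ?thesis using Fa[of k y] col k by simp
  qed
  have rowb: "(\<Sum>y\<in>UNIV. P l x y) \<le> mu x" if hl: "l \<ge> 1" for l x
  proof -
    obtain k where k: "l = Suc k" using hl by (cases l) auto
    have s: "(\<Sum>y\<in>UNIV. K x y * v k y) > 0" using Kp vpos by (intro sum_pos_univ) auto
    have "(\<Sum>y\<in>UNIV. P l x y) = u l x * (\<Sum>y\<in>UNIV. K x y * v l y)"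
      unfolding P_def async_pi_def u_def[symmetric] v_def[symmetric]
      by (simp add: sum_distrib_left mult_ac)
    also have "\<dots> \<le> u l x * (\<Sum>y\<in>UNIV. K x y * v k y)"
      unfolding k using upos[of k x] Kp
      by (intro mult_left_mono sum_mono) (auto intro: less_imp_le simp: vdec)
    also have "\<dots> = mu x" unfolding k uS u_upd_def using s by simp
    finally show ?thesis .
  qed
  have qcol: "q l = (\<Sum>y\<in>UNIV. v l y * a l y)" for l
    unfolding q_def async_q_def P_def[symmetric] using col
    by (subst sum.swap) simp
  have qinc: "q l \<le> q (Suc l)" if hl: "l \<ge> 1" for l
  proof -
    have "v l y * a l y \<le> v (Suc l) y * a (Suc l) y" for y
    proof -
      have ainc: "a l y \<le> a (Suc l) y" unfolding a_def using Kp uinc[OF that]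
        by (intro sum_mono mult_left_mono) (auto intro: less_imp_le)
      have "v l y * a l y \<le> v l y * a (Suc l) y"
        using ainc vpos by (intro mult_left_mono) (auto intro: less_imp_le)
      moreover have "v l y * a l y \<le> nu y" using colb[OF that] col by simp
      moreover have "v (Suc l) y * a (Suc l) y = min (v l y * a (Suc l) y) (nu y)"
        using vS[of l y] Fa[of l y] apos[of l y] by (simp add: min_mult_distrib_right)
      ultimately show ?thesis by simp
    qed
    then show ?thesis unfolding qcol by (intro sum_mono)
  qed
  have FFdec: "FF K mu nu (v (Suc l)) y \<le> FF K mu nu (v l) y" for l y
    by (rule FF_mono[OF Kp mp np vpos]) (simp add: vdec)
  have below: "v (Suc l) y < v0 y \<longrightarrow> v (Suc l) y = FF K mu nu (v l) y" for l y
  proof (induction l)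
    case 0 then show ?case using vS[of 0 y] by (auto simp: v_def min_def)
  next
    case (Suc l)
    show ?case
    proof
      assume h: "v (Suc (Suc l)) y < v0 y"
      show "v (Suc (Suc l)) y = FF K mu nu (v (Suc l)) y"
      proof (cases "v (Suc l) y < v0 y")
        case True
        then have "v (Suc l) y = FF K mu nu (v l) y" using Suc by blast
        then show ?thesis using vS[of "Suc l" y] FFdec[of l y] by (simp add: min_def)
      next
        case False
        then show ?thesis using h vS[of "Suc l" y] by (auto simp: min_def split: if_splits)
      qed
    qed
  qed
  have nonempty: "\<exists>y. v l y = v0 y" for l
  proof (induction l)
    case 0 then show ?case by (simp add: v_def)
  next
    case (Suc l)
    then obtain y0 where y0: "v l y0 = v0 y0" by blast
    show ?case
    proof (rule ccontr)
      assume "\<not> ?case"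
      then have ne: "\<forall>y. v (Suc l) y \<noteq> v0 y" by blast
      have le: "FF K mu nu (v l) y \<le> v l y" for y
      proof (cases "v l y = v0 y")
        case True
        then show ?thesis using ne[rule_format, of y] vS[of l y] by (auto simp: min_def split: if_splits)
      next
        case False
        then have lt: "v l y < v0 y" using vle0[of l y] by simp
        then obtain k where k: "l = Suc k" by (cases l) (auto simp: v_def)
        have "v l y = FF K mu nu (v k) y" using below[of k y] lt k by simp
        then show ?thesis using FFdec[of k y] k by simp
      qed
      have lt0: "FF K mu nu (v l) y0 < v l y0"
        using ne[rule_format, of y0] vS[of l y0] y0 by (auto simp: min_def split: if_splits)
      have eq: "(\<Sum>y\<in>UNIV. FF K mu nu (v l) y * a (Suc l) y) = (\<Sum>y\<in>UNIV. v l y * a (Suc l) y)"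
        unfolding a_def uS by (rule FF_avg[OF Kp mp np vpos mu_sum nu_sum])
      have "(\<Sum>y\<in>UNIV. FF K mu nu (v l) y * a (Suc l) y) < (\<Sum>y\<in>UNIV. v l y * a (Suc l) y)"
        using apos le lt0 by (intro sum_strict_mono_ex1) (auto intro: mult_right_mono less_imp_le)
      then show False using eq by simp
    qed
  qed
  have iii: "\<exists>ys. \<forall>l. v l ys = v0 ys"
  proof (rule ccontr)
    assume "\<not> ?thesis"
    then have "\<forall>y. \<exists>l. v l y \<noteq> v0 y" by blast
    then obtain f where f: "\<forall>y. v (f y) y \<noteq> v0 y" by metis
    define L where "L = Max (range f)"
    obtain y where y: "v L y = v0 y" using nonempty by blast
    have "f y \<le> L" unfolding L_def by (rule Max_ge) auto
    then have "v L y \<le> v (f y) y" by (rule vmono)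
    then have "v0 y \<le> v (f y) y" using y by simp
    then show False using f vle0[of "f y" y] by (metis order.antisym)
  qed
  show ?thesis
  proof (intro conjI allI impI)
    fix l :: nat and x assume "1 \<le> l"
    then show "u l x \<le> u (Suc l) x" by (rule uinc)
    have "u l x > 0" using \<open>1 \<le> l\<close> upos by (cases l) auto
    then show "eps * ln (u l x) \<le> eps * ln (u (Suc l) x)"
      using uinc[OF \<open>1 \<le> l\<close>, of x] eps_pos by (intro mult_left_mono) auto
  next
    fix l :: nat and y
    show "v (Suc l) y \<le> v l y" by (rule vdec)
    show "eps * ln (v (Suc l) y) \<le> eps * ln (v l y)"
      using vdec[of l y] vpos eps_pos by (intro mult_left_mono) auto
  next
    fix l :: nat assume "1 \<le> l" then show "q l \<le> q (Suc l)" by (rule qinc)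
  next
    fix l :: nat and x assume "1 \<le> l" then show "(\<Sum>y\<in>UNIV. P l x y) \<le> mu x" by (rule rowb)
  next
    fix l :: nat and y assume "1 \<le> l" then show "(\<Sum>x\<in>UNIV. P l x y) \<le> nu y" by (rule colb)
  next
    show "\<exists>ys. \<forall>l. v l ys = v0 ys" by (rule iii)
  qed
qed

end
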